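(* Let $\epsilon,r>0$. Then there exist a sponsored search setting (numbers of agents $n$ and slots $k\le n$), $\alpha\in\mathbb{R}^n_{>}$ and $\theta\in\Theta^\alpha$ such that $R(\theta)\ge r$ and $\alpha$-VCG has a Nash equilibrium (for $\theta$) with revenue at most $\epsilon$. Similarly, there exist such a setting, $\alpha\in\mathbb{R}^n_{>}$ and $\theta\in\Theta^\alpha$ such that $R(\theta)\ge r$ and $\alpha$-GSP has a Nash equilibrium (for $\theta$) with revenue at most $\epsilon$.
   Context: Sponsored search setting: a set $N=\{1,\dots,n\}$ of agents and $k\le n$ slots. An outcome assigns the agents to distinct positions in $\{1,\dots,n\}$; position $j\le k$ means receiving slot $j$, positions $>k$ mean receiving nothing (value $0$). Utilities are quasilinear. $\mathbb{R}^n_{>}$ is the set of vectors $\alpha$ with $1=\alpha_1>\alpha_2>\dots>\alpha_k>0$ and $\alpha_j=0$ for $j>k$ (set $\alpha_{n+1}=0$). For $\alpha\in\mathbb{R}^n_{>}$, $\Theta^\alpha$ is the set of type profiles in which each agent $i$ has a value $v_i(\theta_i)\ge0$ and values slot $j$ at $\alpha_j v_i(\theta_i)$. VCG: agents report bids $x_{i,j}$ for each slot; an assignment maximizing total bid is chosen and each agent pays the Clarke payment. The VCG outcome for $\theta$ is the result of VCG under truthful bids $x_{i,j}=$ true value of $i$ for slot $j$; $R(\theta)$ is its revenue (sum of payments). $\alpha$-GSP and $\alpha$-VCG: each agent submits a single $b_i\ge 0$, interpreted as bid $\alpha_j b_i$ on slot $j$. Agents are ranked by $b_i$ (ties arbitrary);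 the agent of rank $j\le k$ gets slot $j$. Writing $b_{(l)}$ for the $l$-th highest submitted value ($0$ if $l>n$): in $\alpha$-GSP the rank-$j$ agent pays $\alpha_j b_{(j+1)}$; in $\alpha$-VCG (the VCG mechanism applied to these bid vectors) it pays $\sum_{l=j}^{k}(\alpha_l-\alpha_{l+1})b_{(l+1)}$. Revenue is the sum of payments. A Nash equilibrium (for a given type profile, complete information) is a profile of submitted numbers from which no agent can strictly gain by unilaterally changing its number. *)

theory Defs
  imports Complex_Main
begin

text \<open>Agents are 0,...,n-1; positions are 1,...,n; positions j > k carry no slot.
  A type profile in Theta^alpha is represented by the value vector v (v i \<ge> 0);
  agent i values position j at alpha j * v i.\<close>

definition alpha_ok :: "nat \<Rightarrow> nat \<Rightarrow> (nat \<Rightarrow> real) \<Rightarrow> bool" where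
  "alpha_ok n k \<alpha> \<longleftrightarrow> 1 \<le> k \<and> k \<le> n \<and> \<alpha> 1 = 1 \<and>
     (\<forall>j. 1 \<le> j \<and> j < k \<longrightarrow> \<alpha> (Suc j) < \<alpha> j) \<and> \<alpha> k > 0 \<and>
     (\<forall>j. k < j \<longrightarrow> \<alpha> j = 0)"

definition types_ok :: "nat \<Rightarrow> (nat \<Rightarrow> real) \<Rightarrow> bool" where
  "types_ok n v \<longleftrightarrow> (\<forall>i<n. 0 \<le> v i)"

definition assignment :: "nat \<Rightarrow> nat set \<Rightarrow> (nat \<Rightarrow> nat) \<Rightarrow> bool" where
  "assignment n S \<sigma> \<longleftrightarrow> inj_on \<sigma> S \<and> \<sigma> ` S \<subseteq> {1..n}"

definition welfare_of :: "(nat \<Rightarrow> real) \<Rightarrow> (nat \<Rightarrow> real) \<Rightarrow> nat set \<Rightarrow> (nat \<Rightarrow> nat) \<Rightarrow> real" where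
  "welfare_of \<alpha> v S \<sigma> = (\<Sum>i\<in>S. \<alpha> (\<sigma> i) * v i)"

definition opt_welfare :: "nat \<Rightarrow> (nat \<Rightarrow> real) \<Rightarrow> (nat \<Rightarrow> real) \<Rightarrow> nat set \<Rightarrow> real" where
  "opt_welfare n \<alpha> v S = Max {welfare_of \<alpha> v S \<sigma> | \<sigma>. assignment n S \<sigma>}"

definition vcg_outcome :: "nat \<Rightarrow> (nat \<Rightarrow> real) \<Rightarrow> (nat \<Rightarrow> real) \<Rightarrow> nat \<Rightarrow> nat" where
  "vcg_outcome n \<alpha> v = (SOME \<sigma>. assignment n {..<n} \<sigma> \<and>
      welfare_of \<alpha> v {..<n} \<sigma> = opt_welfare n \<alpha> v {..<n})"

definition clarke_payment :: "nat \<Rightarrow> (nat \<Rightarrow> real) \<Rightarrow> (nat \<Rightarrow> real) \<Rightarrow> nat \<Rightarrow> real" where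
  "clarke_payment n \<alpha> v i = opt_welfare n \<alpha> v ({..<n} - {i})
      - welfare_of \<alpha> v ({..<n} - {i}) (vcg_outcome n \<alpha> v)"

definition vcg_revenue :: "nat \<Rightarrow> (nat \<Rightarrow> real) \<Rightarrow> (nat \<Rightarrow> real) \<Rightarrow> real" where
  "vcg_revenue n \<alpha> v = (\<Sum>i<n. clarke_payment n \<alpha> v i)"

text \<open>Rank of agent i under bids b (ties broken in favour of the lower index).\<close>
definition rank :: "nat \<Rightarrow> (nat \<Rightarrow> real) \<Rightarrow> nat \<Rightarrow> nat" where
  "rank n b i = Suc (card {j. j < n \<and> (b j > b i \<or> (b j = b i \<and> j < i))})"

text \<open>l-th highest submitted value (0 if l > n).\<close>
definition bid_at :: "nat \<Rightarrow> (nat \<Rightarrow> real) \<Rightarrow> nat \<Rightarrow> real" where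
  "bid_at n b l = (if 1 \<le> l \<and> l \<le> n then b (THE j. j < n \<and> rank n b j = l) else 0)"

definition gsp_payment :: "nat \<Rightarrow> (nat \<Rightarrow> real) \<Rightarrow> (nat \<Rightarrow> real) \<Rightarrow> nat \<Rightarrow> real" where
  "gsp_payment n \<alpha> b i = \<alpha> (rank n b i) * bid_at n b (Suc (rank n b i))"

definition avcg_payment :: "nat \<Rightarrow> nat \<Rightarrow> (nat \<Rightarrow> real) \<Rightarrow> (nat \<Rightarrow> real) \<Rightarrow> nat \<Rightarrow> real" where
  "avcg_payment n k \<alpha> b i =
     (\<Sum>l\<in>{rank n b i..k}. (\<alpha> l - \<alpha> (Suc l)) * bid_at n b (Suc l))"

definition utility :: "nat \<Rightarrow> (nat \<Rightarrow> real) \<Rightarrow> ((nat \<Rightarrow> real) \<Rightarrow> nat \<Rightarrow> real)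
     \<Rightarrow> (nat \<Rightarrow> real) \<Rightarrow> (nat \<Rightarrow> real) \<Rightarrow> nat \<Rightarrow> real" where
  "utility n \<alpha> pay v b i = \<alpha> (rank n b i) * v i - pay b i"

definition nash :: "nat \<Rightarrow> (nat \<Rightarrow> real) \<Rightarrow> ((nat \<Rightarrow> real) \<Rightarrow> nat \<Rightarrow> real)
     \<Rightarrow> (nat \<Rightarrow> real) \<Rightarrow> (nat \<Rightarrow> real) \<Rightarrow> bool" where
  "nash n \<alpha> pay v b \<longleftrightarrow> (\<forall>i<n. 0 \<le> b i) \<and>
     (\<forall>i<n. \<forall>b'. 0 \<le> b' \<longrightarrow> utility n \<alpha> pay v (b(i := b')) i \<le> utility n \<alpha> pay v b i)"

definition revenue :: "nat \<Rightarrow> ((nat \<Rightarrow> real) \<Rightarrow> nat \<Rightarrow> real) \<Rightarrow> (nat \<Rightarrow> real) \<Rightarrow> real" where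
  "revenue n pay b = (\<Sum>i<n. pay b i)"

end

theory Submission
  imports Defs
begin

declare One_nat_def [simp del]

lemma lt2: "(i::nat) < 2 \<longleftrightarrow> i = 0 \<or> i = 1" by (auto simp: One_nat_def)

definition A0 :: "nat \<Rightarrow> real" where "A0 j = (if j = 1 then 1 else 0)"

lemma rank0: "rank 2 b 0 = (if b 1 > b 0 then 2 else 1)"
proof -
  have "{j. j < 2 \<and> (b j > b 0 \<or> (b j = b 0 \<and> j < 0))} = (if b 1 > b 0 then {1} else {})"
    apply (rule set_eqI)
    apply (simp only: mem_Collect_eq)
    apply (case_tac "x = 0"; case_tac "x = 1"; auto)
    done
  then show ?thesis unfolding rank_def by simp
qed

lemma rank1: "rank 2 b 1 = (if b 0 \<ge> b 1 then 2 else 1)"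
proof -
  have "{j. j < 2 \<and> (b j > b 1 \<or> (b j = b 1 \<and> j < 1))} = (if b 0 \<ge> b 1 then {0} else {})"
    apply (rule set_eqI)
    apply (simp only: mem_Collect_eq)
    apply (case_tac "x = 0"; case_tac "x = 1"; auto)
    done
  then show ?thesis unfolding rank_def by simp
qed

lemma bid2: "bid_at 2 b 2 = min (b 0) (b 1)"
proof (cases "b 0 \<ge> b 1")
  case True
  have "(THE j. j < 2 \<and> rank 2 b j = 2) = 1"
    by (rule the_equality) (use True in \<open>auto simp: rank0 rank1 lt2\<close>)
  then show ?thesis using True by (simp add: bid_at_def)
next
  case False
  have "(THE j. j < 2 \<and> rank 2 b j = 2) = 0"
    by (rule the_equality) (use False in \<open>auto simp: rank0 rank1 lt2\<close>)
  then show ?thesis using False by (simp add: bid_at_def)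
qed

lemma bid3: "bid_at 2 b 3 = 0" by (simp add: bid_at_def)

lemma alpha: "alpha_ok 2 1 A0"
  by (auto simp: alpha_ok_def A0_def)

lemma welf_set01:
  assumes "r > 0"
  shows "{welfare_of A0 (\<lambda>_. r) {0,1} \<sigma> | \<sigma>. assignment 2 {0,1} \<sigma>} = {r}"
proof -
  have "welfare_of A0 (\<lambda>_. r) {0,1} \<sigma> = r" if "assignment 2 {0,1} \<sigma>" for \<sigma>
  proof -
    have "\<sigma> 0 \<in> {1,2}" "\<sigma> 1 \<in> {1,2}" "\<sigma> 0 \<noteq> \<sigma> 1" using that
      by (auto simp: assignment_def inj_on_def)
    then show ?thesis by (auto simp: welfare_of_def A0_def)
  qed
  moreover have "assignment 2 {0,1} Suc" by (auto simp: assignment_def)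
  moreover have "welfare_of A0 (\<lambda>_. r) {0,1} Suc = r" by (simp add: welfare_of_def A0_def)
  ultimately show ?thesis by (smt (verit, best) Collect_cong singleton_conv)
qed

lemma welf_set1:
  assumes "r > 0"
  shows "{welfare_of A0 (\<lambda>_. r) {i} \<sigma> | \<sigma>. assignment 2 {i} \<sigma>} = {0, r}"
proof -
  have "welfare_of A0 (\<lambda>_. r) {i} \<sigma> \<in> {0,r}" for \<sigma>
    by (auto simp: welfare_of_def A0_def)
  moreover have "assignment 2 {i} (\<lambda>_. 1)" "assignment 2 {i} (\<lambda>_. 2)" by (auto simp: assignment_def)
  moreover have "welfare_of A0 (\<lambda>_. r) {i} (\<lambda>_. 1) = r" "welfare_of A0 (\<lambda>_. r) {i} (\<lambda>_. 2) = 0"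
    by (auto simp: welfare_of_def A0_def)
  ultimately show ?thesis by (smt (verit, best) Collect_cong insert_iff singleton_iff insert_compr)
qed

lemma vcgrev:
  assumes "r > 0"
  shows "vcg_revenue 2 A0 (\<lambda>_. r) = r"
proof -
  have L2: "{..<2::nat} = {0,1}" by auto
  have o01: "opt_welfare 2 A0 (\<lambda>_. r) {0,1} = r"
    unfolding opt_welfare_def using welf_set01[OF assms] by simp
  have oi: "opt_welfare 2 A0 (\<lambda>_. r) {i} = r" for i
    unfolding opt_welfare_def using welf_set1[OF assms] assms by simp
  define \<sigma> where "\<sigma> = vcg_outcome 2 A0 (\<lambda>_. r)"
  have ex: "\<exists>\<sigma>. assignment 2 {..<2} \<sigma> \<and> welfare_of A0 (\<lambda>_. r) {..<2} \<sigma> = opt_welfare 2 A0 (\<lambda>_. r) {..<2}"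
    by (rule exI[of _ Suc]) (use o01 in \<open>auto simp: L2 assignment_def welfare_of_def A0_def\<close>)
  have s: "welfare_of A0 (\<lambda>_. r) {0,1} \<sigma> = r"
    using someI_ex[OF ex] unfolding \<sigma>_def vcg_outcome_def L2 o01 by simp
  have "{..<2::nat} - {0} = {1}" "{..<2::nat} - {1} = {0}" by auto
  then have "vcg_revenue 2 A0 (\<lambda>_. r) = (r - A0 (\<sigma> 1) * r) + (r - A0 (\<sigma> 0) * r)"
    unfolding vcg_revenue_def clarke_payment_def
    by (simp add: L2 oi welfare_of_def \<sigma>_def[symmetric])
  also have "\<dots> = r" using s by (simp add: welfare_of_def algebra_simps)
  finally show ?thesis .
qed

definition B0 :: "real \<Rightarrow> nat \<Rightarrow> real" where "B0 r i = (if i = 0 then r else 0)"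

lemma nash_gen:
  assumes r: "r > 0"
    and pay: "\<And>b. pay b 0 = 0 * b 0 + A0 (rank 2 b 0) * bid_at 2 b 2"
    and pay1: "\<And>b. pay b 1 = (if b 0 \<ge> b 1 then 0 else bid_at 2 b 2)"
  shows "nash 2 A0 pay (\<lambda>_. r) (B0 r)"
  unfolding nash_def
proof (intro conjI allI impI)
  fix i :: nat assume "i < 2" then show "0 \<le> B0 r i" using r by (auto simp: B0_def)
next
  fix i :: nat and b' :: real assume i: "i < 2" and b': "0 \<le> b'"
  show "utility 2 A0 pay (\<lambda>_. r) ((B0 r)(i := b')) i \<le> utility 2 A0 pay (\<lambda>_. r) (B0 r) i"
  proof (cases "i = 0")
    case True
    then show ?thesis using r b'
      by (simp add: utility_def pay rank0 bid2 B0_def A0_def)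
  next
    case False
    then have "i = 1" using i by auto
    then show ?thesis using r b'
      by (auto simp: utility_def pay1 rank0 rank1 bid2 B0_def A0_def)
  qed
qed

theorem theorem1:
  fixes \<epsilon> r :: real
  assumes "\<epsilon> > 0" and "r > 0"
  shows "(\<exists>n k \<alpha> v b. alpha_ok n k \<alpha> \<and> types_ok n v \<and> vcg_revenue n \<alpha> v \<ge> r \<and>
            nash n \<alpha> (avcg_payment n k \<alpha>) v b \<and> revenue n (avcg_payment n k \<alpha>) b \<le> \<epsilon>)
       \<and> (\<exists>n k \<alpha> v b. alpha_ok n k \<alpha> \<and> types_ok n v \<and> vcg_revenue n \<alpha> v \<ge> r \<and>
            nash n \<alpha> (gsp_payment n \<alpha>) v b \<and> revenue n (gsp_payment n \<alpha>) b \<le> \<epsilon>)"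
proof -
  have L2: "{..<2::nat} = {0,1}" by auto
  have ty: "types_ok 2 (\<lambda>_. r)" using assms by (simp add: types_ok_def)
  have vr: "vcg_revenue 2 A0 (\<lambda>_. r) \<ge> r" using vcgrev[OF assms(2)] by simp
  have av: "avcg_payment 2 1 A0 b i = (if rank 2 b i = 1 then bid_at 2 b 2 else 0)"
    if "i < 2" for b i
  proof -
    have "rank 2 b i \<ge> 1" by (simp add: rank_def)
    moreover have "rank 2 b i \<le> 2" using that rank0[of b] rank1[of b] by (auto simp: lt2)
    ultimately have "rank 2 b i = 1 \<or> rank 2 b i = 2" by auto
    then show ?thesis by (auto simp: avcg_payment_def A0_def numeral_2_eq_2 simp del: One_nat_def)
  qed
  have gs: "gsp_payment 2 A0 b i = (if rank 2 b i = 1 then bid_at 2 b 2 else 0)" for b i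
    by (auto simp: gsp_payment_def A0_def)
  have n1: "nash 2 A0 (avcg_payment 2 1 A0) (\<lambda>_. r) (B0 r)"
    by (rule nash_gen[OF assms(2)]) (auto simp: av rank0 rank1 A0_def)
  have n2: "nash 2 A0 (gsp_payment 2 A0) (\<lambda>_. r) (B0 r)"
    by (rule nash_gen[OF assms(2)]) (auto simp: gs rank0 rank1 A0_def)
  have r1: "revenue 2 (avcg_payment 2 1 A0) (B0 r) \<le> \<epsilon>"
    using assms by (simp add: revenue_def L2 av rank0 rank1 bid2 B0_def)
  have r2: "revenue 2 (gsp_payment 2 A0) (B0 r) \<le> \<epsilon>"
    using assms by (simp add: revenue_def L2 gs rank0 rank1 bid2 B0_def)
  show ?thesis using alpha ty vr n1 n2 r1 r2 by blast
qed

end
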